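(* Let $v$ be a scalar-valued function on an open set $\Omega\subseteq\mathbb{R}^n$ ($n>1$), and let $\phi_1,\phi_2$ be scalar-valued functions on $\Omega$ such that $\underline{g}=\partial_{\underline{x}}\phi_1$ and $\underline{h}=\partial_{\underline{x}}\phi_2$ are two particular vector-valued solutions of the Clifford Riccati equation $\partial_{\underline{x}} f + f^2 = v$. For $K\in\mathbb{C}$ put $\alpha=K\exp(\phi_1-\phi_2)$. Then \[\underline{f}=\frac{\alpha\,\underline{g}-\underline{h}}{\alpha-1}\] is also a (vector-valued) solution of $\partial_{\underline{x}} f + f^2 = v$ (wherever $\alpha\neq 1$).
   Context: $\mathbb{R}_{0,n}$ is the real Clifford algebra generated by an orthonormal basis $e_1,\dots,e_n$ of $\mathbb{R}^n$ with relations $e_je_k+e_ke_j=-2\delta_{jk}$; $\mathbb{C}_n=\mathbb{R}_{0,n}\otimes\mathbb{C}$. The Dirac operator is $\partial_{\underline{x}}=\sum_{j=1}^n e_j\partial_{x_j}$, acting from the left on Clifford-valued functions. *)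

theory Defs
  imports "HOL-Analysis.Analysis"
begin

text \<open>Complex Clifford algebra C_n = R_{0,n} (x) C, with basis vectors indexed by a finite
linearly ordered type 'n (so n = CARD('n)).  An element is given by its coefficients
on the basis blades e_A, A a subset of 'n (e_A = product of e_i, i in A, in increasing order).\<close>

type_synonym 'n clif = "'n set \<Rightarrow> complex"

definition clif_scalar :: "complex \<Rightarrow> 'n clif" where
  "clif_scalar c = (\<lambda>A. if A = {} then c else 0)"

definition clif_e :: "'n \<Rightarrow> 'n clif" where
  "clif_e j = (\<lambda>A. if A = {j} then 1 else 0)"

definition clif_add :: "'n clif \<Rightarrow> 'n clif \<Rightarrow> 'n clif" where
  "clif_add a b = (\<lambda>A. a A + b A)"

definition clif_smult :: "complex \<Rightarrow> 'n clif \<Rightarrow> 'n clif" where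
  "clif_smult c a = (\<lambda>A. c * a A)"

text \<open>Sign of e_A e_B = sign A B * e_{A symdiff B}, using e_i e_j = - e_j e_i (i ~= j)
and e_i^2 = -1.\<close>
definition clif_sign :: "'n::linorder set \<Rightarrow> 'n set \<Rightarrow> complex" where
  "clif_sign A B = (-1) ^ (card {(i, j). i \<in> A \<and> j \<in> B \<and> j < i} + card (A \<inter> B))"

definition clif_mult :: "'n::{finite,linorder} clif \<Rightarrow> 'n clif \<Rightarrow> 'n clif" where
  "clif_mult a b = (\<lambda>C. \<Sum>A\<in>UNIV. clif_sign A ((A - C) \<union> (C - A)) * a A * b ((A - C) \<union> (C - A)))"

definition clif_partial :: "('n::finite) \<Rightarrow> ((real, 'n) vec \<Rightarrow> 'n clif) \<Rightarrow> (real, 'n) vec \<Rightarrow> 'n clif" where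
  "clif_partial j F x = (\<lambda>A. vector_derivative (\<lambda>t. F (x + t *\<^sub>R axis j 1) A) (at 0))"

definition has_partials :: "((real, 'n::finite) vec) set \<Rightarrow> ((real, 'n) vec \<Rightarrow> 'n clif) \<Rightarrow> bool" where
  "has_partials S F \<longleftrightarrow>
     (\<forall>x\<in>S. \<forall>j A. (\<lambda>t. F (x + t *\<^sub>R axis j 1) A) differentiable (at 0))"

definition dirac :: "((real, 'n::{finite,linorder}) vec \<Rightarrow> 'n clif) \<Rightarrow> (real, 'n) vec \<Rightarrow> 'n clif" where
  "dirac F x = (\<lambda>C. \<Sum>j\<in>UNIV. clif_mult (clif_e j) (clif_partial j F x) C)"

definition riccati_solution ::
  "((real, 'n::{finite,linorder}) vec) set \<Rightarrow> ((real, 'n) vec \<Rightarrow> complex) \<Rightarrow> ((real, 'n) vec \<Rightarrow> 'n clif) \<Rightarrow> bool" where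
  "riccati_solution S v F \<longleftrightarrow> has_partials S F \<and>
     (\<forall>x\<in>S. clif_add (dirac F x) (clif_mult (F x) (F x)) = clif_scalar (v x))"

end

theory Submission
  imports Defs
begin

definition vecf :: "('n::finite \<Rightarrow> complex) \<Rightarrow> 'n clif" where
  "vecf p = (\<lambda>C. \<Sum>k\<in>UNIV. p k * clif_e k C)"

lemma vecf_single[simp]: "vecf p {k} = p k"
proof -
  have "vecf p {k} = (\<Sum>j\<in>UNIV. if j = k then p j else 0)"
    unfolding vecf_def clif_e_def by (intro sum.cong) auto
  also have "\<dots> = p k" by simp
  finally show ?thesis .
qed

lemma vecf_nonsingle: "\<not> (\<exists>k. C = {k}) \<Longrightarrow> vecf p C = 0"
  unfolding vecf_def clif_e_def by auto

lemma vecf_eval: "vecf p C = (if \<exists>k. C = {k} then p (the_elem C) else 0)"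
  using vecf_nonsingle[of C p] by auto

lemma partial_vec:
  assumes "\<And>y. F y = vecf (c y)"
  shows "clif_partial j F x = vecf (\<lambda>k. vector_derivative (\<lambda>t. c (x + t *\<^sub>R axis j 1) k) (at 0))"
proof
  fix C
  show "clif_partial j F x C = vecf (\<lambda>k. vector_derivative (\<lambda>t. c (x + t *\<^sub>R axis j 1) k) (at 0)) C"
  proof (cases "\<exists>k. C = {k}")
    case True
    then obtain k where "C = {k}" by blast
    then show ?thesis unfolding clif_partial_def assms by simp
  next
    case False
    then show ?thesis unfolding clif_partial_def assms by (simp add: vecf_nonsingle)
  qed
qed

lemma mult_right_lin: "clif_mult a (vecf q) C = (\<Sum>k\<in>UNIV. q k * clif_mult a (clif_e k) C)"
proof -
  have "clif_mult a (vecf q) C = (\<Sum>A\<in>UNIV. \<Sum>k\<in>UNIV. q k * (clif_sign A ((A - C) \<union> (C - A)) * a A * clif_e k ((A - C) \<union> (C - A))))"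
    unfolding clif_mult_def vecf_def by (simp only: sum_distrib_left mult_ac)
  also have "\<dots> = (\<Sum>k\<in>UNIV. \<Sum>A\<in>UNIV. q k * (clif_sign A ((A - C) \<union> (C - A)) * a A * clif_e k ((A - C) \<union> (C - A))))"
    by (rule sum.swap)
  also have "\<dots> = (\<Sum>k\<in>UNIV. q k * clif_mult a (clif_e k) C)"
    unfolding clif_mult_def by (simp only: sum_distrib_left)
  finally show ?thesis .
qed

lemma mult_left_lin: "clif_mult (vecf p) b C = (\<Sum>j\<in>UNIV. p j * clif_mult (clif_e j) b C)"
proof -
  have "clif_mult (vecf p) b C = (\<Sum>A\<in>UNIV. \<Sum>k\<in>UNIV. p k * (clif_sign A ((A - C) \<union> (C - A)) * clif_e k A * b ((A - C) \<union> (C - A))))"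
    unfolding clif_mult_def vecf_def by (simp only: sum_distrib_left sum_distrib_right mult_ac)
  also have "\<dots> = (\<Sum>k\<in>UNIV. \<Sum>A\<in>UNIV. p k * (clif_sign A ((A - C) \<union> (C - A)) * clif_e k A * b ((A - C) \<union> (C - A))))"
    by (rule sum.swap)
  also have "\<dots> = (\<Sum>j\<in>UNIV. p j * clif_mult (clif_e j) b C)"
    unfolding clif_mult_def by (simp only: sum_distrib_left)
  finally show ?thesis .
qed

lemma mult_vec: "clif_mult (vecf p) (vecf q) C =
   (\<Sum>j\<in>UNIV. \<Sum>k\<in>UNIV. p j * q k * clif_mult (clif_e j) (clif_e k) C)"
  by (subst mult_left_lin) (simp add: mult_right_lin sum_distrib_left mult.assoc)

lemma dirac_vec:
  assumes "\<And>y. F y = vecf (c y)"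
  shows "dirac F x C = (\<Sum>j\<in>UNIV. \<Sum>k\<in>UNIV.
     vector_derivative (\<lambda>t. c (x + t *\<^sub>R axis j 1) k) (at 0) * clif_mult (clif_e j) (clif_e k) C)"
  unfolding dirac_def partial_vec[OF assms] by (simp add: mult_right_lin)

lemma mult_e_scal: "clif_mult (clif_e j) (clif_scalar c) C = c * clif_e j C"
proof -
  have "clif_mult (clif_e j) (clif_scalar c) C =
     (\<Sum>A\<in>UNIV. if A = {j} then clif_sign {j} (({j} - C) \<union> (C - {j})) *
        (if ({j} - C) \<union> (C - {j}) = {} then c else 0) else 0)"
    unfolding clif_mult_def clif_e_def clif_scalar_def by (intro sum.cong) auto
  also have "\<dots> = clif_sign {j} (({j} - C) \<union> (C - {j})) *
        (if ({j} - C) \<union> (C - {j}) = {} then c else 0)" by simp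
  also have "\<dots> = c * clif_e j C"
  proof (cases "C = {j}")
    case True
    then show ?thesis by (simp add: clif_e_def clif_sign_def)
  next
    case False
    then have "({j} - C) \<union> (C - {j}) \<noteq> {}" by blast
    then show ?thesis using False by (auto simp: clif_e_def dest: subset_singletonD)
  qed
  finally show ?thesis .
qed

lemma dirac_scal: "dirac (\<lambda>y. clif_scalar (\<phi> y)) x =
   vecf (\<lambda>k. vector_derivative (\<lambda>t. \<phi> (x + t *\<^sub>R axis k 1)) (at 0))"
proof
  fix C
  have "clif_partial j (\<lambda>y. clif_scalar (\<phi> y)) x =
     clif_scalar (vector_derivative (\<lambda>t. \<phi> (x + t *\<^sub>R axis j 1)) (at 0))" for j
    unfolding clif_partial_def clif_scalar_def by (rule ext) auto
  then show "dirac (\<lambda>y. clif_scalar (\<phi> y)) x C = vecf (\<lambda>k. vector_derivative (\<lambda>t. \<phi> (x + t *\<^sub>R axis k 1)) (at 0)) C"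
    unfolding dirac_def vecf_def by (simp add: mult_e_scal)
qed

lemma key_deriv:
  fixes P Q A B :: "real \<Rightarrow> complex" and K :: complex
  assumes dP: "(P has_vector_derivative p) (at 0)" and dQ: "(Q has_vector_derivative q) (at 0)"
    and dA: "(A has_vector_derivative a') (at 0)" and dB: "(B has_vector_derivative b') (at 0)"
    and ne: "K * exp (P 0 - Q 0) \<noteq> 1"
  shows "((\<lambda>t. (1 / (K * exp (P t - Q t) - 1)) * (K * exp (P t - Q t) * A t + -1 * B t))
     has_vector_derivative
      ((1 / (K * exp (P 0 - Q 0) - 1)) * (K * exp (P 0 - Q 0) * a' + K * exp (P 0 - Q 0) * (p - q) * A 0 - b')
       - (p - q) * K * exp (P 0 - Q 0) / (K * exp (P 0 - Q 0) - 1)^2 * (K * exp (P 0 - Q 0) * A 0 - B 0))) (at 0)"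
proof -
  define s where "s = (\<lambda>t. P t - Q t)"
  have ds: "(s has_vector_derivative (p - q)) (at 0)" unfolding s_def using dP dQ by (rule has_vector_derivative_diff)
  have ne': "K * exp (s 0) - 1 \<noteq> 0" using ne by (simp add: s_def)
  have g1: "((\<lambda>z. K * exp z) has_field_derivative K * exp (s 0)) (at (s 0))"
    by (auto intro!: derivative_eq_intros)
  have g2: "((\<lambda>z. 1 / (K * exp z - 1)) has_field_derivative - (K * exp (s 0)) / (K * exp (s 0) - 1)^2) (at (s 0))"
    using ne' by (auto intro!: derivative_eq_intros simp: power2_eq_square divide_simps)
  have h1: "((\<lambda>t. K * exp (s t)) has_vector_derivative (p - q) * (K * exp (s 0))) (at 0)"
    using field_vector_diff_chain_at[OF ds g1] by (simp add: o_def)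
  have h2: "((\<lambda>t. 1 / (K * exp (s t) - 1)) has_vector_derivative (p - q) * (- (K * exp (s 0)) / (K * exp (s 0) - 1)^2)) (at 0)"
    using field_vector_diff_chain_at[OF ds g2] by (simp add: o_def)
  have h3: "((\<lambda>t. K * exp (s t) * A t + -1 * B t) has_vector_derivative
      (K * exp (s 0) * a' + (p - q) * (K * exp (s 0)) * A 0 + -1 * b')) (at 0)"
    by (intro has_vector_derivative_add has_vector_derivative_mult h1 dA has_vector_derivative_mult_right dB)
  have "((\<lambda>t. (1 / (K * exp (s t) - 1)) * (K * exp (s t) * A t + -1 * B t)) has_vector_derivative
      (1 / (K * exp (s 0) - 1) * (K * exp (s 0) * a' + (p - q) * (K * exp (s 0)) * A 0 + -1 * b')
       + (p - q) * (- (K * exp (s 0)) / (K * exp (s 0) - 1)^2) * (K * exp (s 0) * A 0 + -1 * B 0))) (at 0)"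
    by (rule has_vector_derivative_mult[OF h2 h3])
  then show ?thesis unfolding s_def by (simp add: algebra_simps)
qed

lemma alg:
  fixes al aj bj ak bk a2 b2 :: complex
  assumes "al \<noteq> 1"
  shows "(1 / (al - 1)) * (al * a2 + al * (aj - bj) * ak - b2)
       - (aj - bj) * al / (al - 1)^2 * (al * ak - bk)
     + (1 / (al - 1) * (al * aj + -1 * bj)) * (1 / (al - 1) * (al * ak + -1 * bk))
   = al / (al - 1) * (a2 + aj * ak) + (-1 / (al - 1)) * (b2 + bj * bk)"
proof -
  define D where "D = al - 1"
  have D: "D \<noteq> 0" using assms by (simp add: D_def)
  have al: "al = D + 1" by (simp add: D_def)
  show ?thesis unfolding al using D by (simp add: field_simps power2_eq_square)
qed

theorem proposition5p2:
  fixes \<Omega> :: "((real, 'n::{finite,linorder}) vec) set"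
    and v \<phi>1 \<phi>2 :: "(real, 'n) vec \<Rightarrow> complex"
    and K :: complex
  assumes "open \<Omega>"
    and "CARD('n) \<ge> 2"
    and "has_partials \<Omega> (\<lambda>x. clif_scalar (\<phi>1 x))"
    and "has_partials \<Omega> (\<lambda>x. clif_scalar (\<phi>2 x))"
    and "riccati_solution \<Omega> v (dirac (\<lambda>x. clif_scalar (\<phi>1 x)))"
    and "riccati_solution \<Omega> v (dirac (\<lambda>x. clif_scalar (\<phi>2 x)))"
  shows "riccati_solution {x \<in> \<Omega>. K * exp (\<phi>1 x - \<phi>2 x) \<noteq> 1} v
     (\<lambda>x. let \<alpha> = K * exp (\<phi>1 x - \<phi>2 x) in
        clif_smult (1 / (\<alpha> - 1))
          (clif_add (clif_smult \<alpha> (dirac (\<lambda>y. clif_scalar (\<phi>1 y)) x))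
                    (clif_smult (-1) (dirac (\<lambda>y. clif_scalar (\<phi>2 y)) x))))"
proof -
  define a where "a = (\<lambda>k y. vector_derivative (\<lambda>t. \<phi>1 (y + t *\<^sub>R axis k 1)) (at 0))"
  define b where "b = (\<lambda>k y. vector_derivative (\<lambda>t. \<phi>2 (y + t *\<^sub>R axis k 1)) (at 0))"
  define al where "al = (\<lambda>y. K * exp (\<phi>1 y - \<phi>2 y))"
  define fk where "fk = (\<lambda>k y. 1 / (al y - 1) * (al y * a k y + -1 * b k y))"
  define a2 where "a2 = (\<lambda>j k y. vector_derivative (\<lambda>t. a k (y + t *\<^sub>R axis j 1)) (at 0))"
  define b2 where "b2 = (\<lambda>j k y. vector_derivative (\<lambda>t. b k (y + t *\<^sub>R axis j 1)) (at 0))"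
  define m where "m = (\<lambda>(j::'n) k. clif_mult (clif_e j) (clif_e k))"
  have g: "dirac (\<lambda>y. clif_scalar (\<phi>1 y)) = (\<lambda>y. vecf (\<lambda>k. a k y))"
    by (rule ext) (simp add: dirac_scal a_def)
  have h: "dirac (\<lambda>y. clif_scalar (\<phi>2 y)) = (\<lambda>y. vecf (\<lambda>k. b k y))"
    by (rule ext) (simp add: dirac_scal b_def)
  have F: "(\<lambda>x. let \<alpha> = K * exp (\<phi>1 x - \<phi>2 x) in
        clif_smult (1 / (\<alpha> - 1))
          (clif_add (clif_smult \<alpha> (dirac (\<lambda>y. clif_scalar (\<phi>1 y)) x))
                    (clif_smult (-1) (dirac (\<lambda>y. clif_scalar (\<phi>2 y)) x))))
     = (\<lambda>y. vecf (\<lambda>k. fk k y))"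
  proof (intro ext)
    fix y C
    show "(let \<alpha> = K * exp (\<phi>1 y - \<phi>2 y) in
        clif_smult (1 / (\<alpha> - 1))
          (clif_add (clif_smult \<alpha> (dirac (\<lambda>y. clif_scalar (\<phi>1 y)) y))
                    (clif_smult (-1) (dirac (\<lambda>y. clif_scalar (\<phi>2 y)) y)))) C
       = vecf (\<lambda>k. fk k y) C"
      unfolding g h Let_def clif_smult_def clif_add_def fk_def al_def vecf_def
      apply (simp add: sum_distrib_left sum.distrib sum_subtractf[symmetric] algebra_simps)
        apply (simp add: sum_divide_distrib[symmetric] sum_subtractf[symmetric] sum_negf diff_divide_distrib)
        apply (simp add: sum_subtractf sum_divide_distrib)
        done
  qed
  have L0: "\<And>x j. x + (0::real) *\<^sub>R axis j 1 = x" by simp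
  have dP1: "((\<lambda>t. \<phi>1 (x + t *\<^sub>R axis j 1)) has_vector_derivative a j x) (at 0)" if "x \<in> \<Omega>" for x j
  proof -
    have "(\<lambda>t. clif_scalar (\<phi>1 (x + t *\<^sub>R axis j 1)) ({}::'n set)) differentiable (at 0)"
      using assms(3) that unfolding has_partials_def by meson
    then have "(\<lambda>t. \<phi>1 (x + t *\<^sub>R axis j 1)) differentiable (at 0)" by (simp add: clif_scalar_def)
    then show ?thesis unfolding a_def by (simp add: vector_derivative_works)
  qed
  have dP2: "((\<lambda>t. \<phi>2 (x + t *\<^sub>R axis j 1)) has_vector_derivative b j x) (at 0)" if "x \<in> \<Omega>" for x j
  proof -
    have "(\<lambda>t. clif_scalar (\<phi>2 (x + t *\<^sub>R axis j 1)) ({}::'n set)) differentiable (at 0)"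
      using assms(4) that unfolding has_partials_def by meson
    then have "(\<lambda>t. \<phi>2 (x + t *\<^sub>R axis j 1)) differentiable (at 0)" by (simp add: clif_scalar_def)
    then show ?thesis unfolding b_def by (simp add: vector_derivative_works)
  qed
  have dA: "((\<lambda>t. a k (x + t *\<^sub>R axis j 1)) has_vector_derivative a2 j k x) (at 0)" if "x \<in> \<Omega>" for x j k
  proof -
    have "(\<lambda>t. vecf (\<lambda>k. a k (x + t *\<^sub>R axis j 1)) {k}) differentiable (at 0)"
      using assms(5) that unfolding has_partials_def riccati_solution_def g by meson
    then have "(\<lambda>t. a k (x + t *\<^sub>R axis j 1)) differentiable (at 0)" by simp
    then show ?thesis unfolding a2_def by (simp add: vector_derivative_works)
  qed
  have dB: "((\<lambda>t. b k (x + t *\<^sub>R axis j 1)) has_vector_derivative b2 j k x) (at 0)" if "x \<in> \<Omega>" for x j k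
  proof -
    have "(\<lambda>t. vecf (\<lambda>k. b k (x + t *\<^sub>R axis j 1)) {k}) differentiable (at 0)"
      using assms(6) that unfolding has_partials_def riccati_solution_def h by meson
    then have "(\<lambda>t. b k (x + t *\<^sub>R axis j 1)) differentiable (at 0)" by simp
    then show ?thesis unfolding b2_def by (simp add: vector_derivative_works)
  qed
  have eqA: "(\<Sum>j\<in>UNIV. \<Sum>k\<in>UNIV. (a2 j k x + a j x * a k x) * m j k C) = clif_scalar (v x) C"
    if "x \<in> \<Omega>" for x C
  proof -
    have "clif_add (dirac (\<lambda>y. vecf (\<lambda>k. a k y)) x) (clif_mult (vecf (\<lambda>k. a k x)) (vecf (\<lambda>k. a k x))) C = clif_scalar (v x) C"
      using assms(5) that unfolding riccati_solution_def g by simp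
    then show ?thesis
      unfolding clif_add_def dirac_vec[of "\<lambda>y. vecf (\<lambda>k. a k y)" "\<lambda>y k. a k y", OF refl] mult_vec
      by (simp add: a2_def m_def algebra_simps sum.distrib)
  qed
  have eqB: "(\<Sum>j\<in>UNIV. \<Sum>k\<in>UNIV. (b2 j k x + b j x * b k x) * m j k C) = clif_scalar (v x) C"
    if "x \<in> \<Omega>" for x C
  proof -
    have "clif_add (dirac (\<lambda>y. vecf (\<lambda>k. b k y)) x) (clif_mult (vecf (\<lambda>k. b k x)) (vecf (\<lambda>k. b k x))) C = clif_scalar (v x) C"
      using assms(6) that unfolding riccati_solution_def h by simp
    then show ?thesis
      unfolding clif_add_def dirac_vec[of "\<lambda>y. vecf (\<lambda>k. b k y)" "\<lambda>y k. b k y", OF refl] mult_vec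
      by (simp add: b2_def m_def algebra_simps sum.distrib)
  qed
  define DK where "DK = (\<lambda>j k x. (1 / (al x - 1)) * (al x * a2 j k x + al x * (a j x - b j x) * a k x - b2 j k x)
       - (a j x - b j x) * al x / (al x - 1)^2 * (al x * a k x - b k x))"
  have dF: "((\<lambda>t. fk k (x + t *\<^sub>R axis j 1)) has_vector_derivative DK j k x) (at 0)"
    if "x \<in> \<Omega>" "al x \<noteq> 1" for x j k
  proof -
    have 1: "((\<lambda>t. \<phi>1 (x + t *\<^sub>R axis j 1)) has_vector_derivative a j x) (at 0)" by (rule dP1[OF that(1)])
    have 2: "((\<lambda>t. \<phi>2 (x + t *\<^sub>R axis j 1)) has_vector_derivative b j x) (at 0)" by (rule dP2[OF that(1)])
    have 3: "((\<lambda>t. a k (x + t *\<^sub>R axis j 1)) has_vector_derivative a2 j k x) (at 0)" by (rule dA[OF that(1)])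
    have 4: "((\<lambda>t. b k (x + t *\<^sub>R axis j 1)) has_vector_derivative b2 j k x) (at 0)" by (rule dB[OF that(1)])
    show ?thesis using key_deriv[OF 1 2 3 4, of K] that(2)
      unfolding fk_def al_def DK_def by (simp add: mult.assoc)
  qed
  show ?thesis unfolding F riccati_solution_def
  proof (intro conjI)
    show "has_partials {x \<in> \<Omega>. K * exp (\<phi>1 x - \<phi>2 x) \<noteq> 1} (\<lambda>y. vecf (\<lambda>k. fk k y))"
      unfolding has_partials_def
    proof (intro ballI allI)
      fix x j A assume x: "x \<in> {x \<in> \<Omega>. K * exp (\<phi>1 x - \<phi>2 x) \<noteq> 1}"
      show "(\<lambda>t. vecf (\<lambda>k. fk k (x + t *\<^sub>R axis j 1)) A) differentiable at 0"
      proof (cases "\<exists>k. A = {k}")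
        case True
        then obtain k where k: "A = {k}" by blast
        have d: "((\<lambda>t. fk k (x + t *\<^sub>R axis j 1)) has_vector_derivative DK j k x) (at 0)"
          using x by (intro dF) (auto simp: al_def)
        show ?thesis using d by (auto simp: k differentiable_def has_vector_derivative_def)
      next
        case False
        then show ?thesis by (simp add: vecf_nonsingle)
      qed
    qed
    show "\<forall>x\<in>{x \<in> \<Omega>. K * exp (\<phi>1 x - \<phi>2 x) \<noteq> 1}.
       clif_add (dirac (\<lambda>y. vecf (\<lambda>k. fk k y)) x) (clif_mult (vecf (\<lambda>k. fk k x)) (vecf (\<lambda>k. fk k x))) =
       clif_scalar (v x)"
    proof (intro ballI ext)
      fix x C assume x: "x \<in> {x \<in> \<Omega>. K * exp (\<phi>1 x - \<phi>2 x) \<noteq> 1}"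
      then have xO: "x \<in> \<Omega>" and ne: "al x \<noteq> 1" by (auto simp: al_def)
      define lam where "lam = al x / (al x - 1)"
      define mu where "mu = -1 / (al x - 1)"
      have T: "DK j k x + fk j x * fk k x = lam * (a2 j k x + a j x * a k x)
           + mu * (b2 j k x + b j x * b k x)" for j k
        unfolding DK_def fk_def lam_def mu_def by (rule alg[OF ne])
      have vd: "vector_derivative (\<lambda>t. fk k (x + t *\<^sub>R axis j 1)) (at 0) = DK j k x" for j k
        by (rule vector_derivative_at[OF dF[OF xO ne]])
      have "clif_add (dirac (\<lambda>y. vecf (\<lambda>k. fk k y)) x) (clif_mult (vecf (\<lambda>k. fk k x)) (vecf (\<lambda>k. fk k x))) C
          = (\<Sum>j\<in>UNIV. \<Sum>k\<in>UNIV. (DK j k x + fk j x * fk k x) * m j k C)"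
        unfolding clif_add_def dirac_vec[of "\<lambda>y. vecf (\<lambda>k. fk k y)" "\<lambda>y k. fk k y", OF refl] mult_vec vd
        by (simp add: m_def algebra_simps sum.distrib)
      also have "\<dots> = lam * (\<Sum>j\<in>UNIV. \<Sum>k\<in>UNIV. (a2 j k x + a j x * a k x) * m j k C)
          + mu * (\<Sum>j\<in>UNIV. \<Sum>k\<in>UNIV. (b2 j k x + b j x * b k x) * m j k C)"
        unfolding T by (simp only: distrib_right mult.assoc sum.distrib sum_distrib_left[symmetric])
      also have "\<dots> = (lam + mu) * clif_scalar (v x) C"
        using eqA[OF xO] eqB[OF xO] by (simp add: distrib_right)
      also have "\<dots> = clif_scalar (v x) C"
      proof -
        have "al x - 1 \<noteq> 0" using ne by simp
        then have "lam + mu = 1" unfolding lam_def mu_def by (metis add_divide_distrib diff_conv_add_uminus divide_self)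
        then show ?thesis by simp
      qed
      finally show "clif_add (dirac (\<lambda>y. vecf (\<lambda>k. fk k y)) x) (clif_mult (vecf (\<lambda>k. fk k x)) (vecf (\<lambda>k. fk k x))) C
          = clif_scalar (v x) C" .
    qed
  qed
qed

end
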